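(* Let $\mathcal W$ be a differentially connected covering equation of the Gibbons–Tsarev equation, with total derivatives $\tilde D_x,\tilde D_y$ (differentially connected: every smooth function $h$ on $\mathcal W$ with $\tilde D_x h=\tilde D_y h=0$ is constant). Let $\psi^{(k)}$, $\varphi^{(k)}$ ($k\ge1$) be smooth functions on $\mathcal W$ and consider the formal series $$\psi(\lambda)=\lambda+\sum_{k\ge1}\psi^{(k)}\lambda^{-k},\qquad \varphi(\lambda)=\frac1\lambda+\sum_{k\ge1}\varphi^{(k)}\lambda^k .$$ Consider the conditions: (1) $\tilde D_x\psi=\dfrac{\psi'}{\lambda^2-z_x\lambda-z_y}$ and $\tilde D_y\psi=\dfrac{(\lambda-z_x)\psi'}{\lambda^2-z_x\lambda-z_y}$ (as series in $\lambda^{-1}$, $\psi'=d\psi/d\lambda$); (2) $\tilde D_x\varphi=-\dfrac1{\varphi^2-z_x\varphi-z_y}$ and $\tilde D_y\varphi=-\dfrac{\varphi-z_x}{\varphi^2-z_x\varphi-z_y}$ (as series in $\lambda$); (3) every coefficient of the Laurent series $\psi(\varphi(\lambda))$ in $\lambda$ is a constant, i.e. $\psi(\varphi(\lambda))=c(\lambda)$ with $c$ independent of the point of $\mathcal W$. Then any two of the conditions (1), (2), (3) imply the remaining one.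
   Context: The Gibbons–Tsarev equation is $z_{yy}+z_xz_{xy}-z_yz_{xx}+1=0$; $z_x,z_y$ are regarded as functions on $\mathcal W$ via the covering projection. $\tilde D_x,\tilde D_y$ act on formal series coefficientwise. The composition $\psi(\varphi(\lambda))=\varphi(\lambda)+\sum_{k\ge1}\psi^{(k)}\varphi(\lambda)^{-k}$ is a well-defined formal Laurent series in $\lambda$ since $1/\varphi(\lambda)$ is a power series in $\lambda$ without constant term; $\psi'(\varphi)$ likewise denotes the composition of $\psi'$ with $\varphi$. *)

theory Defs
  imports "HOL-Computational_Algebra.Formal_Laurent_Series"
begin

text \<open>Abstract model of a covering W of the Gibbons-Tsarev equation
  z_yy + z_x z_xy - z_y z_xx + 1 = 0.
  Points of W are the elements of the type 'w; Fs is the algebra of smooth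
  functions on W; Dx, Dy are the total derivatives (commuting derivations
  of Fs); x, y, z, zx, zy are the pull-backs of the jet coordinates via
  the covering projection.\<close>

definition derivation_on :: "('w \<Rightarrow> real) set \<Rightarrow> (('w \<Rightarrow> real) \<Rightarrow> ('w \<Rightarrow> real)) \<Rightarrow> bool" where
  "derivation_on Fs D \<longleftrightarrow>
     (\<forall>f\<in>Fs. D f \<in> Fs) \<and>
     (\<forall>c. D (\<lambda>_. c) = (\<lambda>_. 0)) \<and>
     (\<forall>f\<in>Fs. \<forall>g\<in>Fs. D (\<lambda>p. f p + g p) = (\<lambda>p. D f p + D g p)) \<and>
     (\<forall>f\<in>Fs. \<forall>g\<in>Fs. D (\<lambda>p. f p * g p) = (\<lambda>p. D f p * g p + f p * D g p))"

definition GT_covering ::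
  "('w \<Rightarrow> real) set \<Rightarrow> (('w \<Rightarrow> real) \<Rightarrow> ('w \<Rightarrow> real)) \<Rightarrow> (('w \<Rightarrow> real) \<Rightarrow> ('w \<Rightarrow> real))
   \<Rightarrow> ('w \<Rightarrow> real) \<Rightarrow> ('w \<Rightarrow> real) \<Rightarrow> ('w \<Rightarrow> real) \<Rightarrow> ('w \<Rightarrow> real) \<Rightarrow> ('w \<Rightarrow> real) \<Rightarrow> bool" where
  "GT_covering Fs Dx Dy x y z zx zy \<longleftrightarrow>
     (\<forall>c. (\<lambda>_. c) \<in> Fs) \<and>
     (\<forall>f\<in>Fs. \<forall>g\<in>Fs. (\<lambda>p. f p + g p) \<in> Fs \<and> (\<lambda>p. f p * g p) \<in> Fs) \<and>
     derivation_on Fs Dx \<and> derivation_on Fs Dy \<and>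
     (\<forall>f\<in>Fs. Dx (Dy f) = Dy (Dx f)) \<and>
     x \<in> Fs \<and> y \<in> Fs \<and> z \<in> Fs \<and> zx \<in> Fs \<and> zy \<in> Fs \<and>
     Dx x = (\<lambda>_. 1) \<and> Dy x = (\<lambda>_. 0) \<and> Dx y = (\<lambda>_. 0) \<and> Dy y = (\<lambda>_. 1) \<and>
     Dx z = zx \<and> Dy z = zy \<and>
     Dy zx = Dx zy \<and>
     (\<forall>p. Dy zy p + zx p * Dx zy p - zy p * Dx zx p + 1 = 0)"

definition diff_connected ::
  "('w \<Rightarrow> real) set \<Rightarrow> (('w \<Rightarrow> real) \<Rightarrow> ('w \<Rightarrow> real)) \<Rightarrow> (('w \<Rightarrow> real) \<Rightarrow> ('w \<Rightarrow> real)) \<Rightarrow> bool" where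
  "diff_connected Fs Dx Dy \<longleftrightarrow>
     (\<forall>h\<in>Fs. Dx h = (\<lambda>_. 0) \<and> Dy h = (\<lambda>_. 0) \<longrightarrow> (\<exists>c. h = (\<lambda>_. c)))"

definition coeff_series :: "(nat \<Rightarrow> 'w \<Rightarrow> real) \<Rightarrow> 'w \<Rightarrow> real fls" where
  "coeff_series a p = fps_to_fls (Abs_fps (\<lambda>k. if k = 0 then 0 else a k p))"

text \<open>psi(lambda) = lambda + sum psi_k lambda^(-k), as a Laurent series in the
  formal variable mu = lambda^(-1) (so lambda = fls_X_inv).\<close>
definition psi_ser :: "(nat \<Rightarrow> 'w \<Rightarrow> real) \<Rightarrow> 'w \<Rightarrow> real fls" where
  "psi_ser psi p = fls_X_inv + coeff_series psi p"

text \<open>d psi / d lambda = - mu^2 d psi / d mu, as a series in mu.\<close>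
definition dlambda :: "real fls \<Rightarrow> real fls" where
  "dlambda F = - (fls_X ^ 2 * fls_deriv F)"

text \<open>phi(lambda) = 1/lambda + sum phi_k lambda^k, Laurent series in lambda.\<close>
definition phi_ser :: "(nat \<Rightarrow> 'w \<Rightarrow> real) \<Rightarrow> 'w \<Rightarrow> real fls" where
  "phi_ser phi p = fls_X_inv + coeff_series phi p"

text \<open>psi(phi(lambda)): substitute mu := 1/phi(lambda), a power series in lambda
  without constant term.\<close>
definition psi_comp_phi :: "(nat \<Rightarrow> 'w \<Rightarrow> real) \<Rightarrow> (nat \<Rightarrow> 'w \<Rightarrow> real) \<Rightarrow> 'w \<Rightarrow> real fls" where
  "psi_comp_phi psi phi p = fls_compose_fps (psi_ser psi p) (fls_regpart (inverse (phi_ser phi p)))"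

text \<open>Coefficientwise action of a total derivative: the leading coefficient 1
  is constant, so it is killed.\<close>
definition D_psi :: "(('w \<Rightarrow> real) \<Rightarrow> ('w \<Rightarrow> real)) \<Rightarrow> (nat \<Rightarrow> 'w \<Rightarrow> real) \<Rightarrow> 'w \<Rightarrow> real fls" where
  "D_psi D psi p = coeff_series (\<lambda>k. D (psi k)) p"

definition D_phi :: "(('w \<Rightarrow> real) \<Rightarrow> ('w \<Rightarrow> real)) \<Rightarrow> (nat \<Rightarrow> 'w \<Rightarrow> real) \<Rightarrow> 'w \<Rightarrow> real fls" where
  "D_phi D phi p = coeff_series (\<lambda>k. D (phi k)) p"

definition cond1 where
  "cond1 Dx Dy zx zy psi \<longleftrightarrow> (\<forall>p.
     (let lam = fls_X_inv; den = lam ^ 2 - fls_const (zx p) * lam - fls_const (zy p) in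
      D_psi Dx psi p = dlambda (psi_ser psi p) / den \<and>
      D_psi Dy psi p = (lam - fls_const (zx p)) * dlambda (psi_ser psi p) / den))"

definition cond2 where
  "cond2 Dx Dy zx zy phi \<longleftrightarrow> (\<forall>p.
     (let f = phi_ser phi p; den = f ^ 2 - fls_const (zx p) * f - fls_const (zy p) in
      D_phi Dx phi p = - (1 / den) \<and>
      D_phi Dy phi p = - ((f - fls_const (zx p)) / den)))"

definition cond3 where
  "cond3 psi phi \<longleftrightarrow> (\<exists>c :: real fls. \<forall>p. psi_comp_phi psi phi p = c)"

end

theory Submission
  imports Defs
begin

definition Aser :: "(nat \<Rightarrow> 'w \<Rightarrow> real) \<Rightarrow> 'w \<Rightarrow> real fps" where
  "Aser a p = Abs_fps (\<lambda>k. if k = 0 then 0 else a k p)"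

definition Pser :: "(nat \<Rightarrow> 'w \<Rightarrow> real) \<Rightarrow> 'w \<Rightarrow> real fps" where
  "Pser a p = 1 + fps_X * Aser a p"

definition gser :: "(nat \<Rightarrow> 'w \<Rightarrow> real) \<Rightarrow> 'w \<Rightarrow> real fps" where
  "gser phi p = fls_regpart (inverse (phi_ser phi p))"

lemma coeff_series_Aser: "coeff_series a p = fps_to_fls (Aser a p)"
  by (simp add: coeff_series_def Aser_def)

lemma Pser_0 [simp]: "Pser a p $ 0 = 1"
  by (simp add: Pser_def)

lemma X_inv_X: "fls_X_inv * (fls_X :: real fls) = 1"
  by (simp flip: fls_inverse_X)

lemma phi_ser_P: "phi_ser phi p = fls_X_inv * fps_to_fls (Pser phi p)"
proof -
  have "fls_X_inv * fps_to_fls (Pser phi p) = fls_X_inv + (fls_X_inv * fls_X) * fps_to_fls (Aser phi p)"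
    by (simp add: Pser_def fls_times_fps_to_fls fps_X_to_fls algebra_simps)
  then show ?thesis by (simp add: X_inv_X phi_ser_def coeff_series_Aser)
qed

lemma Pser_ne [simp]: "Pser a p \<noteq> 0"
  using Pser_0[of a p] by (metis fps_zero_nth zero_neq_one)

lemma gser_eq: "gser phi p = fps_X * inverse (Pser phi p)"
  and gser_fls: "fps_to_fls (gser phi p) = inverse (phi_ser phi p)"
proof -
  have "inverse (phi_ser phi p) = inverse (fls_X_inv) * inverse (fps_to_fls (Pser phi p))"
    unfolding phi_ser_P by (simp add: inverse_mult_distrib)
  also have "\<dots> = fps_to_fls (fps_X * inverse (Pser phi p))"
    by (simp add: fls_inverse_X_inv fls_inverse_fps_to_fls subdegree_eq_0 fls_times_fps_to_fls fps_X_to_fls)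
  finally have e: "inverse (phi_ser phi p) = fps_to_fls (fps_X * inverse (Pser phi p))" .
  then show "gser phi p = fps_X * inverse (Pser phi p)" by (simp add: gser_def)
  then show "fps_to_fls (gser phi p) = inverse (phi_ser phi p)" using e by simp
qed

lemma gser_0 [simp]: "gser phi p $ 0 = 0"
  by (simp add: gser_eq)

lemma gser_1: "gser phi p $ 1 = 1"
  by (simp add: gser_eq fps_inverse_nth_0)

lemma gser_ne [simp]: "gser phi p \<noteq> 0"
  using gser_1[of phi p] by (metis fps_zero_nth zero_neq_one)

lemma phi_ser_ne [simp]: "phi_ser phi p \<noteq> 0"
  unfolding phi_ser_P by simp

lemma compose_X_inv: "fls_compose_fps fls_X_inv (gser phi p) = phi_ser phi p"
  by (simp add: fls_compose_fps_inverse gser_fls flip: fls_inverse_X)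

lemma psi_ser_A: "psi_ser psi p = fls_X_inv + fps_to_fls (Aser psi p)"
  by (simp add: psi_ser_def coeff_series_Aser)

lemma comp_eq: "psi_comp_phi psi phi p = phi_ser phi p + fps_to_fls (Aser psi p oo gser phi p)"
  unfolding psi_comp_phi_def psi_ser_A gser_def[symmetric]
  by (simp add: fls_compose_fps_add compose_X_inv)

lemma dlambda_comp:
  "fls_compose_fps (dlambda (psi_ser psi p)) (gser phi p)
     = 1 - fps_to_fls (gser phi p) ^ 2 * fps_to_fls (fps_deriv (Aser psi p) oo gser phi p)"
proof -
  let ?G = "fps_to_fls (gser phi p)" and ?F = "phi_ser phi p"
  have GF: "?G * ?F = 1" by (simp add: gser_fls)
  have "fls_compose_fps (dlambda (psi_ser psi p)) (gser phi p)
      = - (?G ^ 2 * (- (?F ^ 2) + fps_to_fls (fps_deriv (Aser psi p) oo gser phi p)))"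
    unfolding dlambda_def psi_ser_A
    by (simp add: fls_compose_fps_mult fls_compose_fps_add fls_compose_fps_diff fls_compose_fps_power compose_X_inv fls_deriv_fps_to_fls)
  also have "\<dots> = (?G * ?F) ^ 2 - ?G ^ 2 * fps_to_fls (fps_deriv (Aser psi p) oo gser phi p)"
    by (simp add: algebra_simps power2_eq_square)
  finally show ?thesis unfolding GF by simp
qed

lemma dlambda_ne: "dlambda (psi_ser psi p) \<noteq> 0"
proof
  assume "dlambda (psi_ser psi p) = 0"
  then have "fls_deriv (psi_ser psi p) = 0" by (simp add: dlambda_def)
  then have "fls_nth (fls_deriv (psi_ser psi p)) (-2) = 0" by simp
  then show False by (simp add: psi_ser_A fps_to_fls_nth)
qed

locale dctx =
  fixes Fs :: "('w \<Rightarrow> real) set" and D :: "('w \<Rightarrow> real) \<Rightarrow> ('w \<Rightarrow> real)"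
  assumes cst: "\<And>c. (\<lambda>_. c) \<in> Fs"
    and addF: "\<And>f g. f \<in> Fs \<Longrightarrow> g \<in> Fs \<Longrightarrow> (\<lambda>p. f p + g p) \<in> Fs"
    and mulF: "\<And>f g. f \<in> Fs \<Longrightarrow> g \<in> Fs \<Longrightarrow> (\<lambda>p. f p * g p) \<in> Fs"
    and der: "derivation_on Fs D"
begin

lemma D_cst: "D (\<lambda>_. c) = (\<lambda>_. 0)"
  using der unfolding derivation_on_def by blast

lemma D_cst_p: "D (\<lambda>_. c) p = 0"
  by (simp add: D_cst)

lemma D_add: "f \<in> Fs \<Longrightarrow> g \<in> Fs \<Longrightarrow> D (\<lambda>p. f p + g p) p = D f p + D g p"
  using der unfolding derivation_on_def by metis

lemma D_mul: "f \<in> Fs \<Longrightarrow> g \<in> Fs \<Longrightarrow> D (\<lambda>p. f p * g p) p = D f p * g p + f p * D g p"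
  using der unfolding derivation_on_def by metis

lemma D_in: "f \<in> Fs \<Longrightarrow> D f \<in> Fs"
  using der unfolding derivation_on_def by blast

lemma cmulF: "f \<in> Fs \<Longrightarrow> (\<lambda>p. c * f p) \<in> Fs"
  using mulF[OF cst] by blast

lemma D_cmul: "f \<in> Fs \<Longrightarrow> D (\<lambda>p. c * f p) p = c * D f p"
  using D_mul[OF cst, of f c p] by (simp add: D_cst)

lemma sumF:
  assumes "finite S" "\<And>i. i \<in> S \<Longrightarrow> f i \<in> Fs"
  shows "(\<lambda>p. \<Sum>i\<in>S. f i p) \<in> Fs \<and> (\<forall>p. D (\<lambda>p. \<Sum>i\<in>S. f i p) p = (\<Sum>i\<in>S. D (f i) p))"
  using assms
proof (induction S rule: finite_induct)
  case empty
  then show ?case using cst D_cst by simp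
next
  case (insert x F)
  then have h: "(\<lambda>p. \<Sum>i\<in>F. f i p) \<in> Fs" "f x \<in> Fs" by auto
  have e: "(\<lambda>p. \<Sum>i\<in>insert x F. f i p) = (\<lambda>p. f x p + (\<Sum>i\<in>F. f i p))"
    using insert by simp
  show ?case unfolding e
    using addF[OF h(2) h(1)] D_add[OF h(2) h(1)] insert by simp
qed

definition goodF :: "('w \<Rightarrow> real fps) \<Rightarrow> bool" where
  "goodF F \<longleftrightarrow> (\<forall>n. (\<lambda>p. F p $ n) \<in> Fs)"

definition DF :: "('w \<Rightarrow> real fps) \<Rightarrow> 'w \<Rightarrow> real fps" where
  "DF F p = Abs_fps (\<lambda>n. D (\<lambda>q. F q $ n) p)"

lemma DF_nth [simp]: "DF F p $ n = D (\<lambda>q. F q $ n) p"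
  by (simp add: DF_def)

lemma goodF_const: "goodF (\<lambda>p. C)"
  unfolding goodF_def using cst by simp

lemma DF_const: "DF (\<lambda>p. C) p = 0"
  by (rule fps_ext) (simp add: D_cst)

lemma goodF_add: "goodF F \<Longrightarrow> goodF G \<Longrightarrow> goodF (\<lambda>p. F p + G p)"
  unfolding goodF_def using addF by simp

lemma DF_add: "goodF F \<Longrightarrow> goodF G \<Longrightarrow> DF (\<lambda>p. F p + G p) p = DF F p + DF G p"
  unfolding goodF_def by (intro fps_ext) (simp add: D_add)

lemma goodF_mult: "goodF F \<Longrightarrow> goodF G \<Longrightarrow> goodF (\<lambda>p. F p * G p)"
  unfolding goodF_def fps_mult_nth
  by (intro allI sumF[THEN conjunct1]) (auto intro: mulF)

lemma DF_mult: assumes "goodF F" "goodF G"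
  shows "DF (\<lambda>p. F p * G p) p = DF F p * G p + F p * DF G p"
proof (rule fps_ext)
  fix n
  have "DF (\<lambda>p. F p * G p) p $ n = D (\<lambda>p. \<Sum>i=0..n. F p $ i * G p $ (n - i)) p"
    by (simp add: fps_mult_nth)
  also have "\<dots> = (\<Sum>i=0..n. D (\<lambda>p. F p $ i * G p $ (n - i)) p)"
  proof -
    have "\<And>i. (\<lambda>p. F p $ i * G p $ (n - i)) \<in> Fs"
      using assms unfolding goodF_def by (auto intro: mulF)
    then show ?thesis using sumF[of "{0..n}" "\<lambda>i p. F p $ i * G p $ (n - i)"] by auto
  qed
  also have "\<dots> = (\<Sum>i=0..n. D (\<lambda>p. F p $ i) p * G p $ (n - i) + F p $ i * D (\<lambda>p. G p $ (n - i)) p)"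
    using assms unfolding goodF_def by (intro sum.cong refl D_mul) auto
  also have "\<dots> = (DF F p * G p + F p * DF G p) $ n"
    by (simp add: fps_mult_nth sum.distrib)
  finally show "DF (\<lambda>p. F p * G p) p $ n = (DF F p * G p + F p * DF G p) $ n" .
qed

lemma goodF_power: "goodF F \<Longrightarrow> goodF (\<lambda>p. F p ^ k)"
  by (induction k) (simp_all add: goodF_const goodF_mult)

lemma DF_power: assumes "goodF F"
  shows "DF (\<lambda>p. F p ^ k) p = of_nat k * F p ^ (k - 1) * DF F p"
proof (induction k)
  case 0 then show ?case using DF_const[of 1] by simp
next
  case (Suc k)
  have "DF (\<lambda>p. F p ^ Suc k) p = DF (\<lambda>p. F p * F p ^ k) p" by simp
  also have "\<dots> = DF F p * F p ^ k + F p * DF (\<lambda>p. F p ^ k) p"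
    by (rule DF_mult[OF assms goodF_power[OF assms]])
  also have "\<dots> = of_nat (Suc k) * F p ^ (Suc k - 1) * DF F p"
    unfolding Suc by (cases k) (simp_all add: algebra_simps power_Suc)
  finally show ?case .
qed

lemma fps_inv_rec:
  fixes f :: "real fps"
  assumes "f $ 0 = 1" "n > 0"
  shows "inverse f $ n = - (\<Sum>i=1..n. f $ i * inverse f $ (n - i))"
proof -
  have "f * inverse f = 1" using assms(1) by (simp add: inverse_mult_eq_1')
  then have "(f * inverse f) $ n = 0" using assms(2) by simp
  then have "(\<Sum>i=0..n. f $ i * inverse f $ (n - i)) = 0" by (simp add: fps_mult_nth)
  moreover have "(\<Sum>i=0..n. f $ i * inverse f $ (n - i)) = f $ 0 * inverse f $ n + (\<Sum>i=1..n. f $ i * inverse f $ (n - i))"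
    by (simp add: sum.atLeast_Suc_atMost)
  ultimately show ?thesis using assms(1) by simp
qed

lemma goodF_inverse:
  assumes "goodF P" "\<And>p. P p $ 0 = 1"
  shows "goodF (\<lambda>p. inverse (P p))"
  unfolding goodF_def
proof
  fix n show "(\<lambda>p. inverse (P p) $ n) \<in> Fs"
  proof (induction n rule: less_induct)
    case (less n)
    show ?case
    proof (cases "n = 0")
      case True
      then show ?thesis using assms(2) cst by (simp add: fps_inverse_nth_0)
    next
      case False
      have e: "(\<lambda>p. inverse (P p) $ n) = (\<lambda>p. (-1) * (\<Sum>i\<in>{1..n}. P p $ i * inverse (P p) $ (n - i)))"
        using False assms(2) by (simp add: fps_inv_rec)
      have "\<And>i. i \<in> {1..n} \<Longrightarrow> (\<lambda>p. P p $ i * inverse (P p) $ (n - i)) \<in> Fs"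
        using assms(1) less False unfolding goodF_def by (intro mulF) auto
      then show ?thesis unfolding e
        by (intro cmulF sumF[THEN conjunct1]) auto
    qed
  qed
qed

lemma DF_inverse:
  assumes "goodF P" "\<And>p. P p $ 0 = 1"
  shows "DF (\<lambda>p. inverse (P p)) p = - (inverse (P p) ^ 2 * DF P p)"
proof -
  have g: "goodF (\<lambda>p. inverse (P p))" by (rule goodF_inverse[OF assms])
  have one: "\<And>p. P p * inverse (P p) = 1" using assms(2) by (simp add: inverse_mult_eq_1')
  have "DF (\<lambda>p. P p * inverse (P p)) p = DF P p * inverse (P p) + P p * DF (\<lambda>p. inverse (P p)) p"
    by (rule DF_mult[OF assms(1) g])
  moreover have "DF (\<lambda>p. P p * inverse (P p)) p = 0"
    unfolding one by (rule DF_const)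
  ultimately have "inverse (P p) * (DF P p * inverse (P p) + P p * DF (\<lambda>p. inverse (P p)) p) = 0"
    by simp
  then have "inverse (P p) ^ 2 * DF P p + (P p * inverse (P p)) * DF (\<lambda>p. inverse (P p)) p = 0"
    by (simp add: algebra_simps power2_eq_square)
  then show ?thesis unfolding one by (simp add: eq_neg_iff_add_eq_0 add.commute)
qed

lemma ofnat_mult_nth: "(of_nat k * f :: real fps) $ n = of_nat k * f $ n"
  by (metis fps_mult_left_const_nth fps_of_nat)

lemma compose_mult_nth:
  fixes B g h :: "real fps"
  assumes "g $ 0 = 0"
  shows "((B oo g) * h) $ n = (\<Sum>i=0..n. B $ i * (g ^ i * h) $ n)"
proof -
  have z: "\<And>i j. j < i \<Longrightarrow> (g ^ i) $ j = 0" using startsby_zero_power_prefix[OF assms] by blast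
  have "((B oo g) * h) $ n = (\<Sum>j=0..n. (\<Sum>i=0..j. B $ i * (g ^ i) $ j) * h $ (n - j))"
    by (simp add: fps_mult_nth fps_compose_nth)
  also have "\<dots> = (\<Sum>j=0..n. (\<Sum>i=0..n. B $ i * (g ^ i) $ j) * h $ (n - j))"
  proof (intro sum.cong refl)
    fix j assume j: "j \<in> {0..n}"
    have "(\<Sum>i=0..n. B $ i * (g ^ i) $ j) = (\<Sum>i=0..j. B $ i * (g ^ i) $ j) + (\<Sum>i\<in>{0..n}-{0..j}. B $ i * (g ^ i) $ j)"
      using j by (subst sum.subset_diff[of "{0..j}"]) auto
    also have "(\<Sum>i\<in>{0..n}-{0..j}. B $ i * (g ^ i) $ j) = 0"
      by (intro sum.neutral) (auto simp: z)
    finally show "(\<Sum>i=0..j. B $ i * (g ^ i) $ j) * h $ (n - j) = (\<Sum>i=0..n. B $ i * (g ^ i) $ j) * h $ (n - j)"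
      by simp
  qed
  also have "\<dots> = (\<Sum>j=0..n. \<Sum>i=0..n. B $ i * ((g ^ i) $ j * h $ (n - j)))"
    by (simp only: sum_distrib_right mult.assoc)
  also have "\<dots> = (\<Sum>i=0..n. \<Sum>j=0..n. B $ i * ((g ^ i) $ j * h $ (n - j)))"
    by (rule sum.swap)
  also have "\<dots> = (\<Sum>i=0..n. B $ i * (\<Sum>j=0..n. (g ^ i) $ j * h $ (n - j)))"
    by (simp only: sum_distrib_left)
  also have "\<dots> = (\<Sum>i=0..n. B $ i * (g ^ i * h) $ n)"
    by (simp add: fps_mult_nth)
  finally show ?thesis .
qed

lemma goodF_compose:
  assumes "goodF A" "goodF g"
  shows "goodF (\<lambda>p. A p oo g p)"
  unfolding goodF_def fps_compose_nth
proof
  fix n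
  have "\<And>i. (\<lambda>p. A p $ i * (g p ^ i) $ n) \<in> Fs"
    using assms goodF_power[OF assms(2)] unfolding goodF_def by (intro mulF) auto
  then show "(\<lambda>p. \<Sum>i = 0..n. A p $ i * (g p ^ i) $ n) \<in> Fs"
    by (intro sumF[THEN conjunct1]) auto
qed

lemma DF_compose:
  assumes "goodF A" "goodF g" "\<And>p. g p $ 0 = 0"
  shows "DF (\<lambda>p. A p oo g p) p = (DF A p oo g p) + (fps_deriv (A p) oo g p) * DF g p"
proof (rule fps_ext)
  fix n
  have mem: "\<And>i. (\<lambda>p. A p $ i * (g p ^ i) $ n) \<in> Fs"
    using assms goodF_power[OF assms(2)] unfolding goodF_def by (intro mulF) auto
  have h0: "DF g p $ 0 = 0" using assms(3) by (simp add: D_cst)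
  have "DF (\<lambda>p. A p oo g p) p $ n = D (\<lambda>p. \<Sum>i = 0..n. A p $ i * (g p ^ i) $ n) p"
    by (simp add: fps_compose_nth)
  also have "\<dots> = (\<Sum>i = 0..n. D (\<lambda>p. A p $ i * (g p ^ i) $ n) p)"
    using sumF[of "{0..n}" "\<lambda>i p. A p $ i * (g p ^ i) $ n"] mem by auto
  also have "\<dots> = (\<Sum>i = 0..n. D (\<lambda>p. A p $ i) p * (g p ^ i) $ n + A p $ i * DF (\<lambda>p. g p ^ i) p $ n)"
    using assms goodF_power[OF assms(2)] unfolding goodF_def by (intro sum.cong refl) (simp add: D_mul)
  also have "\<dots> = (DF A p oo g p) $ n + (\<Sum>i = 0..n. A p $ i * (of_nat i * g p ^ (i - 1) * DF g p) $ n)"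
    by (simp add: sum.distrib fps_compose_nth DF_power[OF assms(2)])
  also have "(\<Sum>i = 0..n. A p $ i * (of_nat i * g p ^ (i - 1) * DF g p) $ n) = ((fps_deriv (A p) oo g p) * DF g p) $ n"
  proof -
    have r: "((fps_deriv (A p) oo g p) * DF g p) $ n = (\<Sum>i=0..n. fps_deriv (A p) $ i * (g p ^ i * DF g p) $ n)"
      by (rule compose_mult_nth[OF assms(3)])
    show ?thesis
    proof (cases n)
      case 0
      then show ?thesis unfolding r using h0 by simp
    next
      case (Suc m)
      have zt: "(g p ^ Suc m * DF g p) $ Suc m = 0"
        unfolding fps_mult_nth
      proof (intro sum.neutral ballI)
        fix j assume "j \<in> {0..Suc m}"
        then consider "j < Suc m" | "j = Suc m" by fastforce
        then show "(g p ^ Suc m) $ j * DF g p $ (Suc m - j) = 0"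
        proof cases
          case 1
          then have "(g p ^ Suc m) $ j = 0" using startsby_zero_power_prefix[OF assms(3)] by blast
          then show ?thesis by simp
        next
          case 2
          then show ?thesis using h0 by simp
        qed
      qed
      have "(\<Sum>i = 0..n. A p $ i * (of_nat i * g p ^ (i - 1) * DF g p) $ n)
          = (\<Sum>i = 0..m. A p $ Suc i * (of_nat (Suc i) * g p ^ i * DF g p) $ n)"
        unfolding Suc by (subst sum.atLeast0_atMost_Suc_shift) simp
      also have "\<dots> = (\<Sum>i=0..m. fps_deriv (A p) $ i * (g p ^ i * DF g p) $ n)"
        by (intro sum.cong refl) (simp add: ofnat_mult_nth mult.assoc del: of_nat_Suc)
      also have "\<dots> = (\<Sum>i=0..m. fps_deriv (A p) $ i * (g p ^ i * DF g p) $ n) + fps_deriv (A p) $ Suc m * (g p ^ Suc m * DF g p) $ n"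
        unfolding Suc zt by simp
      also have "\<dots> = (\<Sum>i=0..n. fps_deriv (A p) $ i * (g p ^ i * DF g p) $ n)"
        unfolding Suc by (rule sum.atLeast0_atMost_Suc[symmetric])
      finally show ?thesis unfolding r .
    qed
  qed
  finally show "DF (\<lambda>p. A p oo g p) p $ n = ((DF A p oo g p) + (fps_deriv (A p) oo g p) * DF g p) $ n"
    by simp
qed

lemma fls_famF:
  assumes "goodF F"
  shows "(\<lambda>p. fls_nth (fps_to_fls (F p)) n) \<in> Fs \<and> D (\<lambda>p. fls_nth (fps_to_fls (F p)) n) p = fls_nth (fps_to_fls (DF F p)) n"
proof (cases "n < 0")
  case True then show ?thesis by (simp add: fps_to_fls_nth cst D_cst)
next
  case False then show ?thesis using assms unfolding goodF_def by (simp add: fps_to_fls_nth)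
qed

lemma goodF_Aser: "\<forall>k\<ge>1. a k \<in> Fs \<Longrightarrow> goodF (Aser a)"
  unfolding goodF_def Aser_def
proof
  fix n assume "\<forall>k\<ge>1. a k \<in> Fs"
  then show "(\<lambda>p. Abs_fps (\<lambda>k. if k = 0 then 0 else a k p) $ n) \<in> Fs"
    by (cases "n = 0") (auto simp: cst)
qed

lemma DF_Aser: "DF (Aser a) p = Aser (\<lambda>k. D (a k)) p"
  by (rule fps_ext) (simp add: Aser_def D_cst)

lemma key:
  assumes psi: "\<forall>k\<ge>1. psi k \<in> Fs" and phi: "\<forall>k\<ge>1. phi k \<in> Fs"
  shows "(\<lambda>p. fls_nth (psi_comp_phi psi phi p) n) \<in> Fs"
    and "D (\<lambda>p. fls_nth (psi_comp_phi psi phi p) n) p =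
      fls_nth (fls_compose_fps (D_psi D psi p) (gser phi p)
       + fls_compose_fps (dlambda (psi_ser psi p)) (gser phi p) * D_phi D phi p) n"
proof -
  have gA: "goodF (Aser psi)" and gB: "goodF (Aser phi)"
    using goodF_Aser psi phi by auto
  have Peq: "Pser phi = (\<lambda>p. 1 + fps_X * Aser phi p)" by (rule ext) (simp add: Pser_def)
  have gP: "goodF (Pser phi)" unfolding Peq
    by (intro goodF_add goodF_mult goodF_const gB)
  have geq: "gser phi = (\<lambda>p. fps_X * inverse (Pser phi p))" by (rule ext) (simp add: gser_eq)
  have gI: "goodF (\<lambda>p. inverse (Pser phi p))" by (rule goodF_inverse[OF gP]) simp
  have gg: "goodF (gser phi)" unfolding geq by (intro goodF_mult goodF_const gI)
  have DP: "DF (Pser phi) p = fps_X * DF (Aser phi) p" for p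
    unfolding Peq using DF_add[OF goodF_const goodF_mult[OF goodF_const gB]] DF_mult[OF goodF_const gB]
    by (simp add: DF_const)
  have Dg: "DF (gser phi) p = - (gser phi p ^ 2 * DF (Aser phi) p)" for p
  proof -
    have "DF (gser phi) p = fps_X * DF (\<lambda>p. inverse (Pser phi p)) p"
      unfolding geq using DF_mult[OF goodF_const gI, of fps_X p] by (simp add: DF_const)
    also have "\<dots> = - ((fps_X * inverse (Pser phi p)) ^ 2 * DF (Aser phi) p)"
      unfolding DF_inverse[OF gP Pser_0] DP by (simp add: algebra_simps power2_eq_square)
    finally show ?thesis by (simp add: gser_eq)
  qed
  define K where "K = (\<lambda>p. Aser psi p oo gser phi p)"
  have gK: "goodF K" unfolding K_def by (rule goodF_compose[OF gA gg])
  have DK: "DF K p = (DF (Aser psi) p oo gser phi p) + (fps_deriv (Aser psi p) oo gser phi p) * DF (gser phi) p" for p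
    unfolding K_def by (rule DF_compose[OF gA gg gser_0])
  have gS: "goodF (\<lambda>p. Aser phi p + K p)" by (rule goodF_add[OF gB gK])
  have ceq: "(\<lambda>p. fls_nth (psi_comp_phi psi phi p) n) = (\<lambda>p. fls_nth fls_X_inv n + fls_nth (fps_to_fls (Aser phi p + K p)) n)"
    by (rule ext) (simp add: comp_eq K_def phi_ser_def coeff_series_Aser)
  note ff = fls_famF[OF gS, of n]
  show "(\<lambda>p. fls_nth (psi_comp_phi psi phi p) n) \<in> Fs"
    unfolding ceq using ff addF[OF cst] by blast
  have "D (\<lambda>p. fls_nth (psi_comp_phi psi phi p) n) p = fls_nth (fps_to_fls (DF (\<lambda>p. Aser phi p + K p) p)) n"
    unfolding ceq using ff D_add[OF cst, of "\<lambda>p. fls_nth (fps_to_fls (Aser phi p + K p)) n"] by (simp add: D_cst)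
  also have "fps_to_fls (DF (\<lambda>p. Aser phi p + K p) p) =
      fls_compose_fps (D_psi D psi p) (gser phi p)
       + fls_compose_fps (dlambda (psi_ser psi p)) (gser phi p) * D_phi D phi p"
  proof -
    let ?G = "fps_to_fls (gser phi p)" and ?T = "fps_to_fls (fps_deriv (Aser psi p) oo gser phi p)"
    have e1: "D_phi D phi p = fps_to_fls (DF (Aser phi) p)"
      by (simp add: D_phi_def coeff_series_Aser DF_Aser)
    have e2: "fls_compose_fps (D_psi D psi p) (gser phi p) = fps_to_fls (DF (Aser psi) p oo gser phi p)"
      by (simp add: D_psi_def coeff_series_Aser DF_Aser)
    have "fps_to_fls (DF (\<lambda>p. Aser phi p + K p) p) = fps_to_fls (DF (Aser phi) p) + fps_to_fls (DF K p)"
      using DF_add[OF gB gK] by simp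
    also have "\<dots> = fps_to_fls (DF (Aser phi) p) + fps_to_fls (DF (Aser psi) p oo gser phi p)
        - ?T * ?G ^ 2 * fps_to_fls (DF (Aser phi) p)"
      unfolding DK Dg by (simp add: fls_times_fps_to_fls fps_to_fls_power algebra_simps)
    also have "\<dots> = fls_compose_fps (D_psi D psi p) (gser phi p)
       + fls_compose_fps (dlambda (psi_ser psi p)) (gser phi p) * D_phi D phi p"
      unfolding e1 e2 dlambda_comp by (simp add: algebra_simps)
    finally show ?thesis .
  qed
  finally show "D (\<lambda>p. fls_nth (psi_comp_phi psi phi p) n) p =
      fls_nth (fls_compose_fps (D_psi D psi p) (gser phi p)
       + fls_compose_fps (dlambda (psi_ser psi p)) (gser phi p) * D_phi D phi p) n" .
qed

lemma zero_of_cond3: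
  assumes psi: "\<forall>k\<ge>1. psi k \<in> Fs" and phi: "\<forall>k\<ge>1. phi k \<in> Fs" and c3: "cond3 psi phi"
  shows "fls_compose_fps (D_psi D psi p) (gser phi p)
       + fls_compose_fps (dlambda (psi_ser psi p)) (gser phi p) * D_phi D phi p = 0"
proof -
  obtain c where c: "\<And>p. psi_comp_phi psi phi p = c" using c3 unfolding cond3_def by blast
  show ?thesis
  proof (rule fls_eqI)
    fix n
    have "(\<lambda>p. fls_nth (psi_comp_phi psi phi p) n) = (\<lambda>_. fls_nth c n)" by (simp add: c)
    then show "fls_nth (fls_compose_fps (D_psi D psi p) (gser phi p)
       + fls_compose_fps (dlambda (psi_ser psi p)) (gser phi p) * D_phi D phi p) n = fls_nth 0 n"
      using key(2)[OF psi phi, of n p] by (simp add: D_cst)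
  qed
qed

end

lemma inj_comp:
  assumes "fls_compose_fps X (gser phi p) = fls_compose_fps Y (gser phi p)"
  shows "X = Y"
proof -
  have "fls_compose_fps (X - Y) (gser phi p) = 0"
    using assms by (simp add: fls_compose_fps_diff)
  then show ?thesis by (simp add: fls_compose_fps_eq_0_iff)
qed

lemma den_comp:
  "fls_compose_fps (fls_X_inv ^ 2 - fls_const a * fls_X_inv - fls_const b) (gser phi p)
   = phi_ser phi p ^ 2 - fls_const a * phi_ser phi p - fls_const b"
  by (simp add: fls_compose_fps_diff fls_compose_fps_mult fls_compose_fps_power compose_X_inv)

lemma lin_comp:
  "fls_compose_fps (fls_X_inv - fls_const a) (gser phi p) = phi_ser phi p - fls_const a"
  by (simp add: fls_compose_fps_diff compose_X_inv)

lemma E_ne: "fls_compose_fps (dlambda (psi_ser psi p)) (gser phi p) \<noteq> 0"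
  using dlambda_ne by (simp add: fls_compose_fps_eq_0_iff)

lemma dctx_of_GT:
  assumes "GT_covering Fs Dx Dy x y z zx zy"
  shows "dctx Fs Dx" "dctx Fs Dy"
  using assms unfolding GT_covering_def dctx_def by blast+

theorem mainTheorem10:
  fixes Fs :: "('w \<Rightarrow> real) set"
    and Dx Dy :: "('w \<Rightarrow> real) \<Rightarrow> ('w \<Rightarrow> real)"
    and x y z zx zy :: "'w \<Rightarrow> real"
    and psi phi :: "nat \<Rightarrow> 'w \<Rightarrow> real"
  assumes "GT_covering Fs Dx Dy x y z zx zy"
    and "diff_connected Fs Dx Dy"
    and "\<forall>k\<ge>1. psi k \<in> Fs" and "\<forall>k\<ge>1. phi k \<in> Fs"
  shows "(cond1 Dx Dy zx zy psi \<and> cond2 Dx Dy zx zy phi \<longrightarrow> cond3 psi phi)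
       \<and> (cond1 Dx Dy zx zy psi \<and> cond3 psi phi \<longrightarrow> cond2 Dx Dy zx zy phi)
       \<and> (cond2 Dx Dy zx zy phi \<and> cond3 psi phi \<longrightarrow> cond1 Dx Dy zx zy psi)"
proof -
  interpret X: dctx Fs Dx by (rule dctx_of_GT(1)[OF assms(1)])
  interpret Y: dctx Fs Dy by (rule dctx_of_GT(2)[OF assms(1)])
  note psi = assms(3) and phi = assms(4)
  define g where "g p = gser phi p" for p
  define E where "E p = fls_compose_fps (dlambda (psi_ser psi p)) (g p)" for p
  define F where "F p = phi_ser phi p" for p
  define den2 where "den2 p = F p ^ 2 - fls_const (zx p) * F p - fls_const (zy p)" for p
  define den1 where "den1 p = fls_X_inv ^ 2 - fls_const (zx p) * fls_X_inv - fls_const (zy p)" for p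
  have c1: "cond1 Dx Dy zx zy psi \<longleftrightarrow> (\<forall>p. D_psi Dx psi p = dlambda (psi_ser psi p) / den1 p
      \<and> D_psi Dy psi p = (fls_X_inv - fls_const (zx p)) * dlambda (psi_ser psi p) / den1 p)"
    unfolding cond1_def den1_def Let_def by simp
  have c2: "cond2 Dx Dy zx zy phi \<longleftrightarrow> (\<forall>p. D_phi Dx phi p = - (1 / den2 p)
      \<and> D_phi Dy phi p = - ((F p - fls_const (zx p)) / den2 p))"
    unfolding cond2_def den2_def F_def Let_def by simp
  have dc: "fls_compose_fps (den1 p) (g p) = den2 p" for p
    unfolding den1_def den2_def g_def F_def by (rule den_comp)
  have lc: "fls_compose_fps (fls_X_inv - fls_const (zx p)) (g p) = F p - fls_const (zx p)" for p
    unfolding g_def F_def by (rule lin_comp)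
  have Ene: "E p \<noteq> 0" for p unfolding E_def g_def by (rule E_ne)
  have cmp1: "fls_compose_fps (dlambda (psi_ser psi p) / den1 p) (g p) = E p / den2 p" for p
    unfolding E_def by (simp add: fls_compose_fps_divide dc[symmetric] g_def)
  have cmp2: "fls_compose_fps ((fls_X_inv - fls_const (zx p)) * dlambda (psi_ser psi p) / den1 p) (g p)
      = (F p - fls_const (zx p)) * E p / den2 p" for p
    unfolding E_def by (simp add: fls_compose_fps_divide fls_compose_fps_mult dc[symmetric] lc[symmetric] g_def)
  have part1: "cond3 psi phi" if h1: "cond1 Dx Dy zx zy psi" and h2: "cond2 Dx Dy zx zy phi"
  proof -
    have zx: "fls_compose_fps (D_psi Dx psi p) (g p) + E p * D_phi Dx phi p = 0" for p
      using h1 h2 unfolding c1 c2 by (simp add: cmp1)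
    have zy: "fls_compose_fps (D_psi Dy psi p) (g p) + E p * D_phi Dy phi p = 0" for p
      using h1 h2 unfolding c1 c2 by (simp add: cmp2)
    have const: "fls_nth (psi_comp_phi psi phi p) n = fls_nth (psi_comp_phi psi phi q) n" for p q n
    proof -
      let ?h = "\<lambda>p. fls_nth (psi_comp_phi psi phi p) n"
      have "?h \<in> Fs" by (rule X.key(1)[OF psi phi])
      moreover have "Dx ?h = (\<lambda>_. 0)"
        using X.key(2)[OF psi phi] zx unfolding E_def g_def by (auto intro!: ext)
      moreover have "Dy ?h = (\<lambda>_. 0)"
        using Y.key(2)[OF psi phi] zy unfolding E_def g_def by (auto intro!: ext)
      ultimately obtain c where "?h = (\<lambda>_. c)"
        using assms(2) unfolding diff_connected_def by blast
      then show ?thesis by (metis)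
    qed
    show ?thesis unfolding cond3_def
      by (rule exI[of _ "psi_comp_phi psi phi undefined"]) (auto intro!: fls_eqI const)
  qed
  have part2: "cond2 Dx Dy zx zy phi" if h1: "cond1 Dx Dy zx zy psi" and h3: "cond3 psi phi"
    unfolding c2
  proof
    fix p
    have zx: "fls_compose_fps (D_psi Dx psi p) (g p) + E p * D_phi Dx phi p = 0"
      using X.zero_of_cond3[OF psi phi h3] unfolding E_def g_def by blast
    have zy: "fls_compose_fps (D_psi Dy psi p) (g p) + E p * D_phi Dy phi p = 0"
      using Y.zero_of_cond3[OF psi phi h3] unfolding E_def g_def by blast
    have a: "E p / den2 p + E p * D_phi Dx phi p = 0" using zx h1 unfolding c1 by (simp add: cmp1)
    have b: "(F p - fls_const (zx p)) * E p / den2 p + E p * D_phi Dy phi p = 0"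
      using zy h1 unfolding c1 by (simp add: cmp2)
    show "D_phi Dx phi p = - (1 / den2 p) \<and> D_phi Dy phi p = - ((F p - fls_const (zx p)) / den2 p)"
    proof
      from a have "E p * (D_phi Dx phi p + 1 / den2 p) = 0" by (simp add: algebra_simps)
      then show "D_phi Dx phi p = - (1 / den2 p)" using Ene[of p] by (simp add: eq_neg_iff_add_eq_0)
    next
      from b have "E p * (D_phi Dy phi p + (F p - fls_const (zx p)) / den2 p) = 0" by (simp add: algebra_simps)
      then show "D_phi Dy phi p = - ((F p - fls_const (zx p)) / den2 p)" using Ene[of p] by (simp add: eq_neg_iff_add_eq_0)
    qed
  qed
  have part3: "cond1 Dx Dy zx zy psi" if h2: "cond2 Dx Dy zx zy phi" and h3: "cond3 psi phi"
    unfolding c1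
  proof
    fix p
    have zx: "fls_compose_fps (D_psi Dx psi p) (g p) + E p * D_phi Dx phi p = 0"
      using X.zero_of_cond3[OF psi phi h3] unfolding E_def g_def by blast
    have zy: "fls_compose_fps (D_psi Dy psi p) (g p) + E p * D_phi Dy phi p = 0"
      using Y.zero_of_cond3[OF psi phi h3] unfolding E_def g_def by blast
    have a: "fls_compose_fps (D_psi Dx psi p) (g p) = fls_compose_fps (dlambda (psi_ser psi p) / den1 p) (g p)"
    proof -
      have a0: "fls_compose_fps (D_psi Dx psi p) (g p) = - (E p * D_phi Dx phi p)"
        using zx by (simp add: eq_neg_iff_add_eq_0)
      have "D_phi Dx phi p = - (1 / den2 p)" using h2 unfolding c2 by blast
      then show ?thesis unfolding a0 cmp1 by simp
    qed
    have b: "fls_compose_fps (D_psi Dy psi p) (g p) = fls_compose_fps ((fls_X_inv - fls_const (zx p)) * dlambda (psi_ser psi p) / den1 p) (g p)"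
    proof -
      have b0: "fls_compose_fps (D_psi Dy psi p) (g p) = - (E p * D_phi Dy phi p)"
        using zy by (simp add: eq_neg_iff_add_eq_0)
      have "D_phi Dy phi p = - ((F p - fls_const (zx p)) / den2 p)" using h2 unfolding c2 by blast
      then show ?thesis unfolding b0 cmp2 by (simp add: mult.commute)
    qed
    show "D_psi Dx psi p = dlambda (psi_ser psi p) / den1 p
      \<and> D_psi Dy psi p = (fls_X_inv - fls_const (zx p)) * dlambda (psi_ser psi p) / den1 p"
      using inj_comp[OF a[unfolded g_def]] inj_comp[OF b[unfolded g_def]] by blast
  qed
  show ?thesis using part1 part2 part3 by blast
qed

end
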